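(* For any non-negative integers $b$ and $c$, \[\binom{2b}{b}=\frac{1}{4^c}C(b,c)+\sum_{j=1}^c\frac{1}{4^j}C(b+1,j-1),\qquad 2\,C(b)=\frac{1}{4^c}C(b,c+1)+\sum_{j=1}^c\frac{1}{4^j}C(b+1,j).\]
   Context: $C(p,q)=\frac{(2p)!(2q)!}{p!(p+q)!q!}$ for non-negative integers $p,q$, and $C(b)=\frac{1}{b+1}\binom{2b}{b}$ is the $b$-th Catalan number. *)

theory Defs
  imports Complex_Main
begin

definition superC :: "nat \<Rightarrow> nat \<Rightarrow> real" where
  "superC p q = (fact (2*p) * fact (2*q)) / (fact p * fact (p+q) * fact q)"

definition catalan :: "nat \<Rightarrow> real" where
  "catalan b = real ((2*b) choose b) / real (b+1)"

end

theory Submission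
  imports Defs
begin

lemma sC1: "superC (Suc m) n = superC m n * (2*(2*m+1)) / (m+n+1)"
proof -
  have a: "fact (2*Suc m) = (fact (2*m) :: real) * (2*m+1)*(2*m+2)"
    by (simp add: fact_Suc algebra_simps)
  have b: "fact (Suc m + n) = (fact (m+n) :: real) * (m+n+1)"
    by (simp add: fact_Suc algebra_simps)
  have c: "fact (Suc m) = (fact m :: real) * (m+1)" by (simp add: fact_Suc algebra_simps)
  show ?thesis unfolding superC_def a b c
    by (simp add: divide_simps del: of_nat_Suc) (simp add: algebra_simps)
qed

lemma sC2: "superC m (Suc n) = superC m n * (2*(2*n+1)) / (m+n+1)"
proof -
  have a: "fact (2*Suc n) = (fact (2*n) :: real) * (2*n+1)*(2*n+2)"
    by (simp add: fact_Suc algebra_simps)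
  have b: "fact (m + Suc n) = (fact (m+n) :: real) * (m+n+1)"
    by (simp add: fact_Suc algebra_simps)
  have c: "fact (Suc n) = (fact n :: real) * (n+1)" by (simp add: fact_Suc algebra_simps)
  show ?thesis unfolding superC_def a b c
    by (simp add: divide_simps del: of_nat_Suc) (simp add: algebra_simps)
qed

lemma key: "4 * superC m n = superC (Suc m) n + superC m (Suc n)"
proof -
  have p: "(1 + (real m + real n)) \<noteq> 0" by (simp add: add_pos_nonneg)
  show ?thesis
    unfolding sC1 sC2 using p by (simp add: divide_simps del: of_nat_Suc) (simp add: algebra_simps)
qed

lemma step: "superC b c / 4^c = superC b (c+1) / 4^(c+1) + superC (b+1) c / 4^(c+1)"
  using key[of b c] by (simp add: field_simps)

theorem corollary8p9:
  fixes b c :: nat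
  shows "(real ((2*b) choose b) = superC b c / 4^c + (\<Sum>j=1..c. superC (b+1) (j-1) / 4^j)) \<and>
         (2 * catalan b = superC b (c+1) / 4^c + (\<Sum>j=1..c. superC (b+1) j / 4^j))"
proof (induction c)
  case 0
  have "real ((2*b) choose b) = fact (2*b) / (fact b * fact b)"
    using binomial_fact[of b "2*b", where 'a=real] by (simp add: mult_2)
  moreover have "superC b 1 = 2 * (fact (2*b) / (fact b * fact b)) / (b+1)"
    using sC2[of b 0] by (simp add: superC_def field_simps)
  ultimately show ?case by (simp add: superC_def catalan_def)
next
  case (Suc c)
  then show ?case using step[of b c] step[of b "c+1"] by simp
qed

end
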